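(* Under the setting described in the context, \begin{align*} \Psi & = \sum_{k=0}^{\infty} P_{\lambda++}^k P_{\lambda+-} \left(I- \lambda^{-1} U\right)^{-k-1} \\ & = \sum_{n=0}^{\infty} \left(I- \mu^{-1}T_{++}\right)^{-n-1}P_{\mu+-}V_\mu^n \\ & = \sum_{m=0}^{\infty} Q^m\left(I-\mu^{-1}T_{++}\right)^{-1} \left(P_{\lambda+-}W + P_{\mu+-}\right)W^m, \end{align*} where \[ Q:= \left(I-\mu^{-1}T_{++}\right)^{-1}\left(I+\lambda^{-1}T_{++}\right), \quad W := \left(I + \mu^{-1}U\right)\left(I- \lambda^{-1}U\right)^{-1}, \] and $P_{\mu} := I + \mu^{-1}T$, analogously to $P_\lambda$.
   Context: Consider a fluid queue $\{X_t,\varphi_t\}$ whose phase $\varphi_t$ is a continuous-time Markov chain on a finite state space $\mathcal{S}=\mathcal{S}_+\cup\mathcal{S}_-$ with generator $T$, and whose level moves at unit rates: rate $+1$ in phases of $\mathcal{S}_+$ and rate $-1$ in phases of $\mathcal{S}_-$. Partition $T$ into blocks $T_{++},T_{+-},T_{-+},T_{--}$ according to $\mathcal{S}_+,\mathcal{S}_-$. Let $\Psi$ be the return probability matrix: $\Psi_{ij}$ is the probability that the fluid, starting in phase $i\in\mathcal{S}_+$ at some level, first returns to that level (from above) in phase $j\in\mathcal{S}_-$; equivalently $\Psi$ is the minimal nonnegative solution of $T_{+-} + \Psi T_{--} + T_{++}\Psi + \Psi T_{-+}\Psi = 0$. Let $U := T_{--} + T_{-+}\Psi$ be the generator of the phase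 of the downward record process. For uniformization rates $\lambda,\mu>0$ (large enough that the matrices below are stochastic), set $P_\lambda := I + \lambda^{-1}T$, $P_\mu := I+\mu^{-1}T$, $V_\mu := I + \mu^{-1}U$, with $P_{\lambda++}, P_{\lambda+-}, P_{\mu+-}$ the corresponding sub-blocks. *)

theory Defs
  imports "HOL-Analysis.Analysis"
begin

text \<open>Phase space S = S+ \<union> S-, modelled as the disjoint sum type 'p + 'm
  (Inl = phases in S+, Inr = phases in S-). Matrices are real^'col^'row.\<close>

definition generator :: "real^'s^'s \<Rightarrow> bool" where
  "generator T \<longleftrightarrow> (\<forall>i j. i \<noteq> j \<longrightarrow> 0 \<le> T$i$j) \<and> (\<forall>i. (\<Sum>j\<in>UNIV. T$i$j) = 0)"

definition stochastic :: "real^'s^'s \<Rightarrow> bool" where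
  "stochastic P \<longleftrightarrow> (\<forall>i j. 0 \<le> P$i$j) \<and> (\<forall>i. (\<Sum>j\<in>UNIV. P$i$j) = 1)"

definition nonneg_mat :: "real^'n^'m \<Rightarrow> bool" where
  "nonneg_mat A \<longleftrightarrow> (\<forall>i j. 0 \<le> A$i$j)"

definition blk_pp :: "'a^('p::finite+'m::finite)^('p+'m) \<Rightarrow> 'a^'p^'p" where
  "blk_pp A = (\<chi> i j. A $ Inl i $ Inl j)"
definition blk_pm :: "'a^('p::finite+'m::finite)^('p+'m) \<Rightarrow> 'a^'m^'p" where
  "blk_pm A = (\<chi> i j. A $ Inl i $ Inr j)"
definition blk_mp :: "'a^('p::finite+'m::finite)^('p+'m) \<Rightarrow> 'a^'p^'m" where
  "blk_mp A = (\<chi> i j. A $ Inr i $ Inl j)"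
definition blk_mm :: "'a^('p::finite+'m::finite)^('p+'m) \<Rightarrow> 'a^'m^'m" where
  "blk_mm A = (\<chi> i j. A $ Inr i $ Inr j)"

fun mpow :: "'a::semiring_1^'n^'n \<Rightarrow> nat \<Rightarrow> 'a^'n^'n" where
  "mpow A 0 = mat 1"
| "mpow A (Suc k) = A ** mpow A k"

definition riccati_sol :: "real^('p::finite+'m::finite)^('p+'m) \<Rightarrow> real^'m^'p \<Rightarrow> bool" where
  "riccati_sol T X \<longleftrightarrow>
     blk_pm T + X ** blk_mm T + blk_pp T ** X + X ** blk_mp T ** X = 0"

definition is_Psi :: "real^('p::finite+'m::finite)^('p+'m) \<Rightarrow> real^'m^'p \<Rightarrow> bool" where
  "is_Psi T X \<longleftrightarrow> nonneg_mat X \<and> riccati_sol T X \<and>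
     (\<forall>Y. nonneg_mat Y \<and> riccati_sol T Y \<longrightarrow> (\<forall>i j. X$i$j \<le> Y$i$j))"

text \<open>Generator of the phase of the downward record process: U = T-- + T-+ Psi.\<close>
definition down_gen :: "real^('p::finite+'m::finite)^('p+'m) \<Rightarrow> real^'m^'p \<Rightarrow> real^'m^'m" where
  "down_gen T X = blk_mm T + blk_mp T ** X"

definition unif :: "real \<Rightarrow> real^'n^'n \<Rightarrow> real^'n^'n" where
  "unif r A = mat 1 + (1 / r) *\<^sub>R A"

end

theory Submission
  imports Defs
begin

definition mle :: "real^'n^'m \<Rightarrow> real^'n^'m \<Rightarrow> bool" where
  "mle A B \<longleftrightarrow> (\<forall>i j. A$i$j \<le> B$i$j)"

definition rs :: "real^'n^'m \<Rightarrow> 'm \<Rightarrow> real" where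
  "rs A i = (\<Sum>j\<in>UNIV. A$i$j)"

lemma sum_UNIV_Plus: "(\<Sum>j\<in>(UNIV::('a::finite+'b::finite) set). f j) = (\<Sum>j\<in>UNIV. f (Inl j)) + (\<Sum>j\<in>UNIV. f (Inr j))"
  by (subst UNIV_Plus_UNIV[symmetric], subst sum.Plus) (auto simp: comp_def)

lemma mm_entry: "(A ** B) $ i $ j = (\<Sum>k\<in>UNIV. A$i$k * B$k$j)"
  by (simp add: matrix_matrix_mult_def)

lemma nonneg_mult: "nonneg_mat (A::real^'n^'m) \<Longrightarrow> nonneg_mat (B::real^'k^'n) \<Longrightarrow> nonneg_mat (A ** B)"
  by (auto simp: nonneg_mat_def mm_entry intro!: sum_nonneg)

lemma nonneg_add: "nonneg_mat (A::real^'n^'m) \<Longrightarrow> nonneg_mat B \<Longrightarrow> nonneg_mat (A + B)"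
  by (auto simp: nonneg_mat_def)

lemma nonneg_scale: "nonneg_mat (A::real^'n^'m) \<Longrightarrow> 0 \<le> c \<Longrightarrow> nonneg_mat (c *\<^sub>R A)"
  by (auto simp: nonneg_mat_def)

lemma nonneg_zero[simp]: "nonneg_mat (0::real^'n^'m)"
  by (auto simp: nonneg_mat_def)

lemma nonneg_id[simp]: "nonneg_mat (mat 1::real^'n^'n)"
  by (auto simp: nonneg_mat_def mat_def)

lemma mle_refl[simp]: "mle A A" by (simp add: mle_def)
lemma mle_trans: "mle A B \<Longrightarrow> mle B C \<Longrightarrow> mle A C" unfolding mle_def by (meson order_trans)
lemma mle_antisym: "mle A B \<Longrightarrow> mle B A \<Longrightarrow> A = B"
  by (auto simp: mle_def vec_eq_iff intro: order_antisym)
lemma mle_add: "mle A B \<Longrightarrow> mle C D \<Longrightarrow> mle (A + C) (B + D)"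
  by (auto simp: mle_def intro: add_mono)
lemma mle_scale: "mle A B \<Longrightarrow> 0 \<le> c \<Longrightarrow> mle (c *\<^sub>R A) (c *\<^sub>R B)"
  by (auto simp: mle_def intro: mult_left_mono)
lemma mle_mult:
  assumes "nonneg_mat (A::real^'n^'m)" "nonneg_mat (B::real^'k^'n)" "mle A A'" "mle B B'"
  shows "mle (A ** B) (A' ** B')"
  unfolding mle_def mm_entry
proof (intro allI)
  fix i j
  show "(\<Sum>k\<in>UNIV. A $ i $ k * B $ k $ j) \<le> (\<Sum>k\<in>UNIV. A' $ i $ k * B' $ k $ j)"
    by (rule sum_mono, rule mult_mono) (use assms in \<open>auto simp: mle_def nonneg_mat_def\<close>, meson assms order_trans mle_def nonneg_mat_def)
qed
lemma nonneg_mle: "nonneg_mat A \<longleftrightarrow> mle 0 A" by (simp add: mle_def nonneg_mat_def)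

lemma mm_add_rdistrib: "((A::real^'n^'m) + B) ** C = A ** C + B ** C"
  by (simp add: matrix_matrix_mult_def vec_eq_iff sum.distrib distrib_right)
lemma mm_diff_rdistrib: "((A::real^'n^'m) - B) ** C = A ** C - B ** C"
  by (simp add: matrix_matrix_mult_def vec_eq_iff sum_subtractf left_diff_distrib)
lemma mm_diff_ldistrib: "(A::real^'n^'m) ** (B - C) = A ** B - A ** C"
  by (simp add: matrix_matrix_mult_def vec_eq_iff sum_subtractf right_diff_distrib)
lemma mm_scale_r: "(A::real^'n^'m) ** (k *\<^sub>R B) = k *\<^sub>R (A ** B)"
  by (simp add: matrix_scalar_ac scalar_matrix_assoc)
lemma mm_scale_l: "(k *\<^sub>R (A::real^'n^'m)) ** B = k *\<^sub>R (A ** B)"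
  by (simp add: scalar_matrix_assoc)

lemma mpow_Suc2: "mpow A (Suc k) = mpow A k ** A"
  by (induction k) (simp_all add: matrix_mul_assoc)

lemma mpow_comm: "mpow A k ** A = A ** mpow A k"
  using mpow_Suc2[of A k] by simp

lemma nonneg_mpow: "nonneg_mat (A::real^'n^'n) \<Longrightarrow> nonneg_mat (mpow A k)"
  by (induction k) (simp_all add: nonneg_mult)

lemma tendsto_mmult:
  fixes f :: "'x \<Rightarrow> real^'n^'m" and g :: "'x \<Rightarrow> real^'k^'n"
  assumes "(f \<longlongrightarrow> F) net" "(g \<longlongrightarrow> G) net"
  shows "((\<lambda>x. f x ** g x) \<longlongrightarrow> F ** G) net"
  unfolding matrix_matrix_mult_def
  by (intro tendsto_intros assms)

lemma mono_conv:
  fixes f :: "nat \<Rightarrow> real^'n^'m"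
  assumes inc: "\<And>n. mle (f n) (f (Suc n))" and bd: "\<And>n. mle (f n) B"
  shows "\<exists>Y. f \<longlonglongrightarrow> Y \<and> (\<forall>n. mle (f n) Y) \<and> mle Y B"
proof -
  define Y where "Y = (\<chi> i j. SUP n. f n $ i $ j)"
  have ic: "incseq (\<lambda>n. f n $ i $ j)" for i j
    using inc by (intro incseq_SucI) (simp add: mle_def)
  have bda: "bdd_above (range (\<lambda>n. f n $ i $ j))" for i j
    using bd by (auto simp: mle_def bdd_above_def)
  have lim: "(\<lambda>n. f n $ i $ j) \<longlonglongrightarrow> Y $ i $ j" for i j
    unfolding Y_def using LIMSEQ_incseq_SUP[OF bda ic] by simp
  have "f \<longlonglongrightarrow> Y"
    by (intro vec_tendstoI) (use lim in auto)
  moreover have "mle (f n) Y" for n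
    unfolding mle_def Y_def using bda by (auto intro: cSUP_upper)
  moreover have "mle Y B"
    unfolding mle_def Y_def using bd by (auto simp: mle_def intro!: cSUP_least)
  ultimately show ?thesis by blast
qed


lemma ser:
  fixes Psi :: "real^'m^'p" and L :: "real^'p^'p" and R :: "real^'m^'m" and c :: "real^'m^'p"
  assumes nL: "nonneg_mat L" and nR: "nonneg_mat R" and nc: "nonneg_mat c" and nP: "nonneg_mat Psi"
    and fx: "Psi = L ** Psi ** R + c"
    and mn: "\<And>Y. nonneg_mat Y \<Longrightarrow> mle Y Psi \<Longrightarrow> Y = L ** Y ** R + c \<Longrightarrow> mle Psi Y"
  shows "(\<lambda>k. mpow L k ** c ** mpow R k) sums Psi"
proof -
  define S where "S K = (\<Sum>k<K. mpow L k ** c ** mpow R k)" for K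
  have rem: "Psi = S K + mpow L K ** Psi ** mpow R K" for K
  proof (induction K)
    case 0 show ?case by (simp add: S_def)
  next
    case (Suc K)
    have "mpow L K ** Psi ** mpow R K = mpow L K ** (L ** Psi ** R + c) ** mpow R K"
      using fx by simp
    also have "\<dots> = mpow L (Suc K) ** Psi ** mpow R (Suc K) + mpow L K ** c ** mpow R K"
      by (simp add: matrix_add_ldistrib mm_add_rdistrib mpow_comm matrix_mul_assoc)
    finally show ?case using Suc.IH by (simp add: S_def add.assoc add.commute add.left_commute)
  qed
  have nt: "nonneg_mat (mpow L k ** c ** mpow R k)" for k
    by (intro nonneg_mult nonneg_mpow nL nR nc)
  have nS: "nonneg_mat (S K)" for K
    unfolding S_def by (induction K) (simp_all add: nonneg_add nt)
  have bd: "mle (S K) Psi" for K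
  proof -
    have "nonneg_mat (mpow L K ** Psi ** mpow R K)"
      by (intro nonneg_mult nonneg_mpow nL nR nP)
    moreover have "Psi $ i $ j = S K $ i $ j + (mpow L K ** Psi ** mpow R K) $ i $ j" for i j
      using arg_cong[OF rem[of K], of "\<lambda>X. X $ i $ j"] by simp
    ultimately show ?thesis unfolding mle_def nonneg_mat_def by (metis le_add_same_cancel1)
  qed
  have inc: "mle (S K) (S (Suc K))" for K
    using nt[of K] by (auto simp: S_def mle_def nonneg_mat_def)
  obtain Y where Y: "S \<longlonglongrightarrow> Y" "\<And>n. mle (S n) Y" "mle Y Psi"
    using mono_conv[of S Psi, OF inc bd] by blast
  have SS: "S (Suc K) = L ** S K ** R + c" for K
  proof (induction K)
    case 0 show ?case by (simp add: S_def)
  next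
    case (Suc K)
    have "S (Suc (Suc K)) = S (Suc K) + mpow L (Suc K) ** c ** mpow R (Suc K)"
      by (simp add: S_def)
    also have "\<dots> = L ** (S K + mpow L K ** c ** mpow R K) ** R + c"
      using Suc.IH by (simp del: mpow.simps(2) add: matrix_add_ldistrib mm_add_rdistrib mpow.simps(2)[of L] mpow_Suc2[of R] matrix_mul_assoc)
    also have "\<dots> = L ** S (Suc K) ** R + c" by (simp add: S_def)
    finally show ?case .
  qed
  have l1: "(\<lambda>K. S (Suc K)) \<longlonglongrightarrow> Y" using Y(1) by (rule LIMSEQ_Suc)
  have l2: "(\<lambda>K. S (Suc K)) \<longlonglongrightarrow> L ** Y ** R + c"
    unfolding SS by (intro tendsto_add tendsto_mmult tendsto_const Y(1))
  have YY: "Y = L ** Y ** R + c" using LIMSEQ_unique[OF l1 l2] .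
  have nY: "nonneg_mat Y" using Y(2)[of 0] by (simp add: S_def nonneg_mle)
  have "Y = Psi" using mle_antisym[OF Y(3) mn[OF nY Y(3) YY]] .
  then show ?thesis using Y(1) unfolding sums_def S_def[abs_def] by simp
qed


lemma zmat_pos:
  fixes K :: "real^'n^'n"
  assumes off: "\<And>i j. i \<noteq> j \<Longrightarrow> K$i$j \<le> 0" and pos: "\<And>i. 0 < rs K i"
    and y: "\<And>i. 0 \<le> (K *v x)$i"
  shows "0 \<le> x$i"
proof (rule ccontr)
  assume neg: "\<not> 0 \<le> x$i"
  define m where "m = Min (range (\<lambda>k. x$k))"
  have "m \<in> range (\<lambda>k. x$k)" unfolding m_def by (intro Min_in) auto
  then obtain i0 where i0: "x$i0 = m" by auto
  have mle: "x$i0 \<le> x$k" for k unfolding i0 m_def by (intro Min_le) auto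
  have xneg: "x$i0 < 0" using mle[of i] neg by linarith
  have "(K *v x)$i0 = (\<Sum>j\<in>UNIV. K$i0$j * x$j)" by (simp add: matrix_vector_mult_def)
  also have "\<dots> \<le> (\<Sum>j\<in>UNIV. K$i0$j * x$i0)"
  proof (rule sum_mono)
    fix j show "K$i0$j * x$j \<le> K$i0$j * x$i0"
    proof (cases "j = i0")
      case False then show ?thesis using off[OF False[symmetric]] mle[of j] by (simp add: mult_left_mono_neg)
    qed simp
  qed
  also have "\<dots> = rs K i0 * x$i0" by (simp add: rs_def sum_distrib_right)
  also have "\<dots> < 0" using pos[of i0] xneg by (simp add: mult_pos_neg)
  finally show False using y[of i0] by linarith
qed

lemma zmat_inv:
  fixes K :: "real^'n^'n"
  assumes off: "\<And>i j. i \<noteq> j \<Longrightarrow> K$i$j \<le> 0" and pos: "\<And>i. 0 < rs K i"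
  shows "K ** matrix_inv K = mat 1" "matrix_inv K ** K = mat 1" "nonneg_mat (matrix_inv K)"
proof -
  have ker: "x = 0" if "K *v x = 0" for x
  proof -
    have "0 \<le> x$i" for i using zmat_pos[OF off pos, of x] that by auto
    moreover have "K *v (-x) = 0" using that
      by (simp add: matrix_vector_mult_def vec_eq_iff sum_negf)
    then have "0 \<le> (-x)$i" for i using zmat_pos[OF off pos, of "-x"] by auto
    ultimately show ?thesis by (simp add: vec_eq_iff) (meson neg_0_le_iff_le order_antisym)
  qed
  then have "\<exists>B. B ** K = mat 1" using matrix_left_invertible_ker by blast
  then have "invertible K" using invertible_left_inverse by blast
  then have "K ** matrix_inv K = mat 1 \<and> matrix_inv K ** K = mat 1"
    unfolding invertible_def matrix_inv_def by (rule someI_ex)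
  then show i1: "K ** matrix_inv K = mat 1" and "matrix_inv K ** K = mat 1" by auto
  show "nonneg_mat (matrix_inv K)" unfolding nonneg_mat_def
  proof (intro allI)
    fix i j
    define x where "x = (\<chi> k. matrix_inv K $ k $ j)"
    have "(K *v x)$k = (K ** matrix_inv K)$k$j" for k
      by (simp add: x_def matrix_vector_mult_def matrix_matrix_mult_def)
    then have "0 \<le> (K *v x)$k" for k using i1 by (simp add: mat_def)
    from zmat_pos[OF off pos this] show "0 \<le> matrix_inv K $ i $ j" by (simp add: x_def)
  qed
qed


lemma rs_add[simp]: "rs (A + B) i = rs A i + rs B i" by (simp add: rs_def sum.distrib)
lemma rs_diff[simp]: "rs (A - B) i = rs A i - rs B i" by (simp add: rs_def sum_subtractf)
lemma rs_scale[simp]: "rs (c *\<^sub>R A) i = c * rs A i" by (simp add: rs_def sum_distrib_left)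
lemma rs_id[simp]: "rs (mat 1 :: real^'n^'n) i = 1" by (simp add: rs_def mat_def)
lemma rs_mult: "rs ((A::real^'n^'m) ** B) i = (\<Sum>k\<in>UNIV. A$i$k * rs B k)"
  unfolding rs_def mm_entry by (simp add: sum_distrib_left) (rule sum.swap)
lemma rs_mult_le:
  assumes "nonneg_mat (A::real^'n^'m)" "\<And>k. rs B k \<le> 1"
  shows "rs (A ** B) i \<le> rs A i"
  unfolding rs_mult by (subst (2) rs_def, rule sum_mono)
    (use assms in \<open>auto simp: nonneg_mat_def intro: mult_left_le\<close>)

lemma blk_pp_unif: "blk_pp (unif r T) = unif r (blk_pp T)"
  by (simp add: blk_pp_def unif_def mat_def vec_eq_iff)
lemma blk_mm_unif: "blk_mm (unif r T) = unif r (blk_mm T)"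
  by (simp add: blk_mm_def unif_def mat_def vec_eq_iff)
lemma blk_pm_unif: "blk_pm (unif r T) = (1/r) *\<^sub>R blk_pm T"
  by (simp add: blk_pm_def unif_def mat_def vec_eq_iff)
lemma blk_mp_unif: "blk_mp (unif r T) = (1/r) *\<^sub>R blk_mp T"
  by (simp add: blk_mp_def unif_def mat_def vec_eq_iff)

lemma stoch_blocks:
  assumes "stochastic P"
  shows "nonneg_mat (blk_pp P)" "nonneg_mat (blk_pm P)" "nonneg_mat (blk_mp P)" "nonneg_mat (blk_mm P)"
    "rs (blk_pp P) i + rs (blk_pm P) i = 1" "rs (blk_mp P) k + rs (blk_mm P) k = 1"
  using assms unfolding stochastic_def nonneg_mat_def blk_pp_def blk_pm_def blk_mp_def blk_mm_def rs_def
  by (auto simp: sum_UNIV_Plus[symmetric])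

lemma gen_blocks:
  assumes "generator T"
  shows "nonneg_mat (blk_pm T)" "nonneg_mat (blk_mp T)"
    "\<And>i j. i \<noteq> j \<Longrightarrow> 0 \<le> blk_pp T $ i $ j" "\<And>i j. i \<noteq> j \<Longrightarrow> 0 \<le> blk_mm T $ i $ j"
    "rs (blk_pp T) i + rs (blk_pm T) i = 0" "rs (blk_mp T) k + rs (blk_mm T) k = 0"
  using assms unfolding generator_def nonneg_mat_def blk_pp_def blk_pm_def blk_mp_def blk_mm_def rs_def
  by (auto simp: sum_UNIV_Plus[symmetric])


lemma minimality:
  fixes T :: "real^('p::finite + 'm::finite)^('p + 'm)" and Psi :: "real^'m^'p"
  assumes gen: "generator T" and Psi: "is_Psi T Psi" and lam: "0 < lam"
    and st: "stochastic (unif lam T)"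
  shows "\<And>i. rs Psi i \<le> 1"
    and "\<And>Y. nonneg_mat Y \<Longrightarrow> mle Y Psi \<Longrightarrow>
           blk_pp T ** Y + Y ** down_gen T Psi + blk_pm T = 0 \<Longrightarrow> mle Psi Y"
proof -
  define A where "A = blk_pp T"
  define B where "B = blk_pm T"
  define C where "C = blk_mp T"
  define D where "D = blk_mm T"
  define P where "P = unif lam T"
  define Ppp where "Ppp = blk_pp P"
  define Ppm where "Ppm = blk_pm P"
  define Pmp where "Pmp = blk_mp P"
  define Pmm where "Pmm = blk_mm P"
  note sb = stoch_blocks[OF st, folded P_def, folded Ppp_def Ppm_def Pmp_def Pmm_def]
  define G where "G X = (1/2) *\<^sub>R (Ppm + X ** Pmm + Ppp ** X + X ** Pmp ** X)" for X :: "real^'m^'p"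
  define Ric where "Ric X = B + X ** D + A ** X + X ** C ** X" for X :: "real^'m^'p"
  have Gid: "G X = X + (1/(2*lam)) *\<^sub>R Ric X" for X
  proof -
    have e: "Ppp = mat 1 + (1/lam) *\<^sub>R A" "Pmm = mat 1 + (1/lam) *\<^sub>R D"
      "Ppm = (1/lam) *\<^sub>R B" "Pmp = (1/lam) *\<^sub>R C"
      unfolding Ppp_def Pmm_def Ppm_def Pmp_def P_def blk_pp_unif blk_mm_unif blk_pm_unif blk_mp_unif
      by (simp_all add: A_def B_def C_def D_def unif_def)
    show ?thesis unfolding G_def Ric_def e
      by (simp add: matrix_add_ldistrib mm_add_rdistrib mm_scale_l mm_scale_r scaleR_add_right
          scaleR_add_left algebra_simps) (simp add: vec_eq_iff)
  qed
  have Gnn: "nonneg_mat (G X)" if "nonneg_mat X" for X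
    unfolding G_def using that sb by (intro nonneg_scale nonneg_add nonneg_mult) auto
  have Gmono: "mle (G X) (G Y)" if "nonneg_mat X" "mle X Y" for X Y
    unfolding G_def using that sb
    by (intro mle_scale mle_add mle_mult nonneg_mult) auto
  have Grs: "rs (G X) i \<le> 1" if "nonneg_mat X" "\<And>k. rs X k \<le> 1" for X i
  proof -
    have "rs (Ppp ** X) i \<le> rs Ppp i" by (rule rs_mult_le) (use sb that in auto)
    moreover have "rs (X ** Pmp ** X) i \<le> rs (X ** Pmp) i"
      by (rule rs_mult_le) (use sb that in \<open>auto intro: nonneg_mult\<close>)
    moreover have "rs (X ** Pmm) i + rs (X ** Pmp) i = rs X i"
    proof -
      have "rs (X ** Pmm) i + rs (X ** Pmp) i = (\<Sum>k\<in>UNIV. X$i$k * (rs Pmp k + rs Pmm k))"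
        unfolding rs_mult by (simp add: sum.distrib[symmetric] algebra_simps)
      also have "\<dots> = rs X i" using sb(6) by (simp add: rs_def)
      finally show ?thesis .
    qed
    ultimately show ?thesis unfolding G_def using sb(5)[of i] that(2)[of i] by simp
  qed
  have Psol: "Ric Psi = 0" using Psi by (simp add: is_Psi_def riccati_sol_def Ric_def A_def B_def C_def D_def)
  have PsiG: "G Psi = Psi" using Gid Psol by simp
  have nP: "nonneg_mat Psi" using Psi by (simp add: is_Psi_def)
  define X where "X n = (G ^^ n) 0" for n
  have XS: "X (Suc n) = G (X n)" for n by (simp add: X_def)
  have Xnn: "nonneg_mat (X n)" for n by (induction n) (simp_all add: XS X_def[of 0] Gnn)
  have Xinc: "mle (X n) (X (Suc n))" for n
  proof (induction n)
    case 0 show ?case using Gnn[of 0] by (simp add: XS X_def nonneg_mle)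
  next
    case (Suc n) show ?case unfolding XS[of "Suc n"] unfolding XS[of n] using Gmono[OF Xnn Suc] by (simp add: XS)
  qed
  have Xbd: "mle (X n) Y" if "nonneg_mat Y" "mle (G Y) Y" for n Y
  proof (induction n)
    case 0 show ?case using that by (simp add: X_def nonneg_mle)
  next
    case (Suc n) show ?case unfolding XS using mle_trans[OF Gmono[OF Xnn Suc] that(2)] .
  qed
  have Xrs: "rs (X n) i \<le> 1" for n i
  proof (induction n arbitrary: i)
    case 0 show ?case by (simp add: X_def rs_def)
  next
    case (Suc n) show ?case unfolding XS by (rule Grs[OF Xnn Suc])
  qed
  obtain Z where Z: "X \<longlonglongrightarrow> Z" "\<And>n. mle (X n) Z" "mle Z Psi"
    using mono_conv[of X Psi, OF Xinc Xbd[OF nP]] PsiG by auto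
  have nZ: "nonneg_mat Z" using Z(2)[of 0] by (simp add: X_def nonneg_mle)
  have l1: "(\<lambda>n. X (Suc n)) \<longlonglongrightarrow> Z" using Z(1) by (rule LIMSEQ_Suc)
  have l2: "(\<lambda>n. X (Suc n)) \<longlonglongrightarrow> G Z"
    unfolding XS G_def by (intro tendsto_intros tendsto_mmult Z(1))
  have GZ: "G Z = Z" using LIMSEQ_unique[OF l2 l1] .
  have "Ric Z = 0" using Gid[of Z] GZ lam by simp
  then have "riccati_sol T Z" by (simp add: riccati_sol_def Ric_def A_def B_def C_def D_def)
  then have "mle Psi Z" using Psi nZ by (auto simp: is_Psi_def mle_def)
  then have ZP: "Z = Psi" using Z(3) by (simp add: mle_antisym)
  show "rs Psi i \<le> 1" for i
  proof -
    have "(\<lambda>n. rs (X n) i) \<longlonglongrightarrow> rs Z i"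
      unfolding rs_def by (intro tendsto_intros Z(1))
    then show ?thesis using Xrs ZP by (metis LIMSEQ_le_const2)
  qed
  show "mle Psi Y" if nY: "nonneg_mat Y" and YP: "mle Y Psi"
      and syl: "blk_pp T ** Y + Y ** down_gen T Psi + blk_pm T = 0" for Y
  proof -
    have "Ric Y = - (Y ** C ** (Psi - Y))"
    proof -
      have "Ric Y = (A ** Y + Y ** (D + C ** Psi) + B) - Y ** C ** Psi + Y ** C ** Y"
        unfolding Ric_def by (simp add: matrix_add_ldistrib matrix_mul_assoc algebra_simps)
      also have "\<dots> = - (Y ** C ** (Psi - Y))"
        using syl by (simp add: A_def B_def C_def D_def down_gen_def mm_diff_ldistrib)
      finally show ?thesis .
    qed
    moreover have "nonneg_mat (Y ** C ** (Psi - Y))"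
      using nY YP gen_blocks(2)[OF gen] unfolding C_def
      by (intro nonneg_mult) (auto simp: mle_def nonneg_mat_def)
    ultimately have "mle (G Y) Y" unfolding Gid using lam
      by (auto simp: mle_def nonneg_mat_def intro!: mult_nonneg_nonneg)
    then have "mle (X n) Y" for n by (rule Xbd[OF nY])
    then have "mle Z Y" unfolding mle_def
    proof (intro allI)
      fix i j assume h: "\<And>n. \<forall>i j. X n $ i $ j \<le> Y $ i $ j"
      have "(\<lambda>n. X n $ i $ j) \<longlonglongrightarrow> Z $ i $ j" by (intro tendsto_intros Z(1))
      then show "Z $ i $ j \<le> Y $ i $ j" using h by (meson LIMSEQ_le_const2)
    qed
    then show ?thesis using ZP by simp
  qed
qed


lemma diff_scale_iff: "P - Q = c *\<^sub>R S \<Longrightarrow> c \<noteq> 0 \<Longrightarrow> (P = Q \<longleftrightarrow> S = (0::'a::real_vector))"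
  by (metis eq_iff_diff_eq_0 scaleR_eq_0_iff)

theorem theorem2:
  fixes T :: "real^('p::finite + 'm::finite)^('p + 'm)"
    and Psi :: "real^'m^'p"
    and lam mu :: real
  assumes gen: "generator T"
    and Psi: "is_Psi T Psi"
    and lam_pos: "0 < lam" and mu_pos: "0 < mu"
    and P_lam_st: "stochastic (unif lam T)"
    and P_mu_st: "stochastic (unif mu T)"
  shows "((\<lambda>k. mpow (blk_pp (unif lam T)) k ** blk_pm (unif lam T)
              ** mpow (matrix_inv (mat 1 - (1 / lam) *\<^sub>R down_gen T Psi)) (k + 1))
          sums Psi) \<and>
         ((\<lambda>n. mpow (matrix_inv (mat 1 - (1 / mu) *\<^sub>R blk_pp T)) (n + 1)
              ** blk_pm (unif mu T) ** mpow (unif mu (down_gen T Psi)) n)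
          sums Psi) \<and>
         ((\<lambda>m. mpow (matrix_inv (mat 1 - (1 / mu) *\<^sub>R blk_pp T) ** unif lam (blk_pp T)) m
              ** matrix_inv (mat 1 - (1 / mu) *\<^sub>R blk_pp T)
              ** (blk_pm (unif lam T)
                    ** (unif mu (down_gen T Psi) ** matrix_inv (mat 1 - (1 / lam) *\<^sub>R down_gen T Psi))
                  + blk_pm (unif mu T))
              ** mpow (unif mu (down_gen T Psi) ** matrix_inv (mat 1 - (1 / lam) *\<^sub>R down_gen T Psi)) m)
          sums Psi)"
proof -
  define A where "A = blk_pp T"
  define B where "B = blk_pm T"
  define C where "C = blk_mp T"
  define D where "D = blk_mm T"
  define U where "U = down_gen T Psi"
  have U_eq: "U = D + C ** Psi" by (simp add: U_def down_gen_def C_def D_def)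
  define Syl where "Syl X = A ** X + X ** U + B" for X :: "real^'m^'p"
  note mn = minimality[OF gen Psi lam_pos P_lam_st, folded A_def B_def U_def Syl_def]
  have nP: "nonneg_mat Psi" using Psi by (simp add: is_Psi_def)
  have SylP: "Syl Psi = 0"
  proof -
    have "B + Psi ** D + A ** Psi + Psi ** C ** Psi = 0"
      using Psi by (simp add: is_Psi_def riccati_sol_def A_def B_def C_def D_def)
    then show ?thesis unfolding Syl_def U_eq
      by (simp add: matrix_add_ldistrib matrix_mul_assoc algebra_simps)
  qed
  note gb = gen_blocks[OF gen, folded A_def B_def C_def D_def]
  note sl = stoch_blocks[OF P_lam_st] and sm = stoch_blocks[OF P_mu_st]
  define K1 where "K1 = mat 1 - (1/lam) *\<^sub>R U"
  define K2 where "K2 = mat 1 - (1/mu) *\<^sub>R A"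
  define R where "R = matrix_inv K1"
  define N where "N = matrix_inv K2"
  define V where "V = unif mu U"
  have Uoff: "0 \<le> U$i$j" if "i \<noteq> j" for i j
  proof -
    have "0 \<le> (C ** Psi)$i$j" using nonneg_mult[OF gb(2) nP] by (simp add: nonneg_mat_def)
    then show ?thesis using gb(4)[OF that] by (simp add: U_eq)
  qed
  have Urs: "rs U i \<le> 0" for i
  proof -
    have "rs (C ** Psi) i \<le> rs C i" by (rule rs_mult_le[OF gb(2) mn(1)])
    then show ?thesis using gb(6)[of i] by (simp add: U_eq)
  qed
  have off1: "K1$i$j \<le> 0" if "i \<noteq> j" for i j
    using Uoff[OF that] lam_pos that by (simp add: K1_def mat_def)
  have pos1: "0 < rs K1 i" for i
    using Urs[of i] lam_pos by (simp add: K1_def divide_nonpos_pos)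
  have K1: "K1 ** R = mat 1" "R ** K1 = mat 1" "nonneg_mat R"
    unfolding R_def using zmat_inv[OF off1 pos1] by auto
  have off2: "K2$i$j \<le> 0" if "i \<noteq> j" for i j
    using gb(3)[OF that] mu_pos that by (simp add: K2_def mat_def)
  have pos2: "0 < rs K2 i" for i
  proof -
    have "0 \<le> rs B i" using gb(1) by (simp add: rs_def nonneg_mat_def sum_nonneg)
    then show ?thesis using gb(5)[of i] mu_pos by (simp add: K2_def divide_nonpos_pos)
  qed
  have K2: "K2 ** N = mat 1" "N ** K2 = mat 1" "nonneg_mat N"
    unfolding N_def using zmat_inv[OF off2 pos2] by auto
  have nV: "nonneg_mat V"
    unfolding nonneg_mat_def
  proof (intro allI)
    fix i j show "0 \<le> V$i$j"
    proof (cases "i = j")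
      case True
      have "0 \<le> (C ** Psi)$i$i" using nonneg_mult[OF gb(2) nP] by (simp add: nonneg_mat_def)
      moreover have "0 \<le> 1 + D $ i $ i / mu" using sm(4) unfolding blk_mm_unif
        by (simp add: nonneg_mat_def unif_def mat_def D_def) (metis (full_types))
      ultimately show ?thesis using True mu_pos
        by (simp add: V_def unif_def U_eq mat_def add_divide_distrib)
          (smt (verit) divide_nonneg_pos)
    next
      case False then show ?thesis using Uoff[OF False] mu_pos by (simp add: V_def unif_def mat_def)
    qed
  qed
  have PL: "blk_pp (unif lam T) = mat 1 + (1/lam) *\<^sub>R A" "blk_pm (unif lam T) = (1/lam) *\<^sub>R B"
    "blk_pm (unif mu T) = (1/mu) *\<^sub>R B"
    unfolding blk_pp_unif blk_pm_unif by (simp_all add: A_def B_def unif_def)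
  have E1: "X ** K1 - (blk_pp (unif lam T) ** X + blk_pm (unif lam T)) = (- (1/lam)) *\<^sub>R Syl X" for X
    unfolding PL K1_def Syl_def
    by (simp add: matrix_add_ldistrib mm_add_rdistrib mm_diff_ldistrib mm_diff_rdistrib mm_scale_l mm_scale_r
        scaleR_add_right algebra_simps)
  have E2: "K2 ** X - (X ** V + blk_pm (unif mu T)) = (- (1/mu)) *\<^sub>R Syl X" for X
    unfolding PL unfolding K2_def Syl_def V_def unif_def
    by (simp add: matrix_add_ldistrib mm_add_rdistrib mm_diff_ldistrib mm_diff_rdistrib mm_scale_l mm_scale_r
        scaleR_add_right algebra_simps)
  have E3: "K2 ** X ** K1 - (blk_pp (unif lam T) ** X ** V + blk_pm (unif lam T) ** V + blk_pm (unif mu T) ** K1)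
     = (- (1/lam + 1/mu)) *\<^sub>R Syl X" for X
    unfolding PL unfolding K1_def K2_def Syl_def V_def unif_def
    by (simp add: matrix_add_ldistrib mm_add_rdistrib mm_diff_ldistrib mm_diff_rdistrib mm_scale_l mm_scale_r
        scaleR_add_right matrix_mul_assoc algebra_simps)
  define Lp where "Lp = blk_pp (unif lam T)"
  define Pm where "Pm = blk_pm (unif lam T)"
  define Qm where "Qm = blk_pm (unif mu T)"
  have nLp: "nonneg_mat Lp" "nonneg_mat Pm" "nonneg_mat Qm"
    using sl(1,2) sm(2) by (simp_all add: Lp_def Pm_def Qm_def)
  have lam_ne: "- (1/lam) \<noteq> 0" and mu_ne: "- (1/mu) \<noteq> 0" and lm_ne: "- (1/lam + 1/mu) \<noteq> 0"
    using lam_pos mu_pos by (auto simp: add_pos_pos) (smt (verit) divide_pos_pos)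
  note E1' = diff_scale_iff[OF E1 lam_ne, folded Lp_def Pm_def]
  note E2' = diff_scale_iff[OF E2 mu_ne, folded Qm_def]
  note E3' = diff_scale_iff[OF E3 lm_ne, folded Lp_def Pm_def Qm_def]
  have s1: "(\<lambda>k. mpow Lp k ** (Pm ** R) ** mpow R k) sums Psi"
  proof (rule ser[OF nLp(1) K1(3) nonneg_mult[OF nLp(2) K1(3)] nP])
    have "Psi ** K1 = Lp ** Psi + Pm" using E1'[of Psi] SylP by simp
    then have "Psi ** K1 ** R = (Lp ** Psi + Pm) ** R" by simp
    then show "Psi = Lp ** Psi ** R + Pm ** R"
      by (simp add: mm_add_rdistrib matrix_mul_assoc[symmetric] K1)
  next
    fix Y assume Y: "nonneg_mat Y" "mle Y Psi" "Y = Lp ** Y ** R + Pm ** R"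
    then have "Y ** K1 = (Lp ** Y ** R + Pm ** R) ** K1" by simp
    then have "Y ** K1 = Lp ** Y + Pm"
      by (simp add: mm_add_rdistrib matrix_mul_assoc[symmetric] K1)
    then have "Syl Y = 0" using E1' by simp
    then show "mle Psi Y" using mn(2)[OF Y(1,2)] by (simp add: Syl_def)
  qed
  have s2: "(\<lambda>k. mpow N k ** (N ** Qm) ** mpow V k) sums Psi"
  proof (rule ser[OF K2(3) nV nonneg_mult[OF K2(3) nLp(3)] nP])
    have "K2 ** Psi = Psi ** V + Qm" using E2'[of Psi] SylP by simp
    then have "N ** (K2 ** Psi) = N ** (Psi ** V + Qm)" by simp
    then show "Psi = N ** Psi ** V + N ** Qm"
      by (simp add: matrix_add_ldistrib matrix_mul_assoc K2)
  next
    fix Y assume Y: "nonneg_mat Y" "mle Y Psi" "Y = N ** Y ** V + N ** Qm"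
    then have "K2 ** Y = K2 ** (N ** Y ** V + N ** Qm)" by simp
    then have "K2 ** Y = Y ** V + Qm"
      by (simp add: matrix_add_ldistrib matrix_mul_assoc K2)
    then have "Syl Y = 0" using E2' by simp
    then show "mle Psi Y" using mn(2)[OF Y(1,2)] by (simp add: Syl_def)
  qed
  define Q where "Q = N ** Lp"
  define W where "W = V ** R"
  define c3 where "c3 = N ** (Pm ** W + Qm)"
  have s3: "(\<lambda>k. mpow Q k ** c3 ** mpow W k) sums Psi"
  proof (rule ser)
    show "nonneg_mat Q" "nonneg_mat W" "nonneg_mat c3"
      unfolding Q_def W_def c3_def using nLp K1(3) K2(3) nV
      by (auto intro!: nonneg_mult nonneg_add)
    show "nonneg_mat Psi" by (rule nP)
    have "K2 ** Psi ** K1 = Lp ** Psi ** V + Pm ** V + Qm ** K1" using E3'[of Psi] SylP by simp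
    then have "N ** (K2 ** Psi ** K1) ** R = N ** (Lp ** Psi ** V + Pm ** V + Qm ** K1) ** R" by simp
    then show "Psi = Q ** Psi ** W + c3"
      unfolding Q_def W_def c3_def
      by (simp add: matrix_add_ldistrib mm_add_rdistrib matrix_mul_assoc[symmetric] K1)
        (simp add: matrix_mul_assoc K2 add.assoc)
  next
    fix Y assume Y: "nonneg_mat Y" "mle Y Psi" "Y = Q ** Y ** W + c3"
    then have "K2 ** Y ** K1 = K2 ** (Q ** Y ** W + c3) ** K1" by simp
    then have "K2 ** Y ** K1 = Lp ** Y ** V + Pm ** V + Qm ** K1"
      unfolding Q_def W_def c3_def
      by (simp add: matrix_add_ldistrib mm_add_rdistrib matrix_mul_assoc[symmetric] K1)
        (simp add: matrix_mul_assoc K2)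
    then have "Syl Y = 0" using E3' by simp
    then show "mle Psi Y" using mn(2)[OF Y(1,2)] by (simp add: Syl_def)
  qed
  have G1: "(\<lambda>k. mpow Lp k ** Pm ** mpow R (k+1)) sums Psi"
    using s1 by (simp add: matrix_mul_assoc)
  have G2: "(\<lambda>n. mpow N (n+1) ** Qm ** mpow V n) sums Psi"
  proof -
    have "mpow N (n+1) ** Qm ** mpow V n = mpow N n ** (N ** Qm) ** mpow V n" for n
      by (simp del: mpow.simps add: mpow_Suc2 matrix_mul_assoc)
    then show ?thesis using s2 by simp
  qed
  have G3: "(\<lambda>m. mpow (N ** unif lam A) m ** N ** (Pm ** (V ** R) + Qm) ** mpow (V ** R) m) sums Psi"
  proof -
    have "Lp = unif lam A" by (simp add: Lp_def A_def blk_pp_unif)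
    then show ?thesis using s3 unfolding Q_def W_def c3_def by (simp add: matrix_mul_assoc)
  qed
  show ?thesis using G1 G2 G3
    unfolding Lp_def Pm_def Qm_def N_def R_def K1_def K2_def V_def U_def A_def by blast
qed

end
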